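(* With $\Delta=\{D_1,\dots,D_6\}$ and $\sigma_1=D_1+D_2-D_3$, $\sigma_2=-D_1+D_2+D_3-D_4-D_6$, $\sigma_3=-D_2+D_3+D_4-D_5$, $\sigma_4=-D_3+D_4+D_5$, $\sigma_5=-D_5+D_6$ in $\mathbb Z\Delta$, let $(D,E,F)$ be a low fundamental triple, put $\gamma=D+E-F$, and suppose $\sigma_5\in\mathrm{supp}_\Sigma\gamma$. Then, up to exchanging $D$ and $E$, $(D,E,F)$ is one of: $(D_2,D_3,D_1+D_4+D_5)$ with $\gamma=\sigma_2+\sigma_5$; $(D_3,D_3,D_1+2D_5)$ with $\gamma=\sigma_2+\sigma_3+\sigma_5$; $(D_2,D_2,D_4+D_5)$ with $\gamma=\sigma_1+\sigma_2+\sigma_5$; $(D_2,D_3,2D_5)$ with $\gamma=\sigma_1+\sigma_2+\sigma_3+\sigma_5$; $(D_3,D_4,D_1+D_5)$ with $\gamma=\sigma_2+\sigma_3+\sigma_4+\sigma_5$; $(D_4,D_4,D_1)$ with $\gamma=\sigma_2+\sigma_3+2\sigma_4+\sigma_5$.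
   Context: $\Sigma=\{\sigma_1,\dots,\sigma_5\}$. For $D,E\in\mathbb Z\Delta$ write $D\le_\Sigma E$ if $E-D\in\mathbb N\Sigma$. A triple $(D,E,F)\in(\mathbb N\Delta)^3$ with $F\le_\Sigma D+E$ is low if for all $D',E'\in\mathbb N\Delta$ with $D'\le_\Sigma D$, $E'\le_\Sigma E$ and $F\le_\Sigma D'+E'$ one has $D'=D$ and $E'=E$; it is fundamental if $D,E\in\Delta$. For $\gamma=\sum a_i\sigma_i\in\mathbb N\Sigma$, $\mathrm{supp}_\Sigma\gamma=\{\sigma_i:a_i>0\}$. *)

theory Defs
  imports Main "HOL-Library.Function_Algebras"
begin

text \<open>The basis Delta = {D1,...,D6}; ZDelta is the free abelian group on it,
  represented as functions delta => int (with pointwise operations).\<close>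

datatype delta = d1 | d2 | d3 | d4 | d5 | d6

type_synonym zdelta = "delta \<Rightarrow> int"

definition D :: "nat \<Rightarrow> zdelta" where
  "D i = (\<lambda>x. if x = ([d1, d2, d3, d4, d5, d6] ! (i - 1)) then 1 else 0)"

definition sigma :: "nat \<Rightarrow> zdelta" where
  "sigma i = (if i = 1 then D 1 + D 2 - D 3
    else if i = 2 then - D 1 + D 2 + D 3 - D 4 - D 6
    else if i = 3 then - D 2 + D 3 + D 4 - D 5
    else if i = 4 then - D 3 + D 4 + D 5
    else if i = 5 then - D 5 + D 6
    else 0)"

definition sigma_coeffs :: "(nat \<Rightarrow> nat) \<Rightarrow> zdelta \<Rightarrow> bool" where
  "sigma_coeffs a g \<longleftrightarrow> g = (\<Sum>i\<in>{1..5}. of_nat (a i) * sigma i)"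

definition NSigma :: "zdelta set" where
  "NSigma = {g. \<exists>a. sigma_coeffs a g}"

definition NDelta :: "zdelta set" where
  "NDelta = {x. \<forall>d. x d \<ge> 0}"

definition Delta :: "zdelta set" where
  "Delta = D ` {1..6}"

definition le_Sigma :: "zdelta \<Rightarrow> zdelta \<Rightarrow> bool" where
  "le_Sigma x y \<longleftrightarrow> y - x \<in> NSigma"

definition supp_Sigma :: "zdelta \<Rightarrow> zdelta set" where
  "supp_Sigma g = {sigma i | i. i \<in> {1..5} \<and> (\<exists>a. sigma_coeffs a g \<and> a i > 0)}"

definition low_triple :: "zdelta \<Rightarrow> zdelta \<Rightarrow> zdelta \<Rightarrow> bool" where
  "low_triple x y z \<longleftrightarrow> x \<in> NDelta \<and> y \<in> NDelta \<and> z \<in> NDelta \<and> le_Sigma z (x + y) \<and>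
     (\<forall>x' y'. x' \<in> NDelta \<longrightarrow> y' \<in> NDelta \<longrightarrow> le_Sigma x' x \<longrightarrow> le_Sigma y' y \<longrightarrow>
        le_Sigma z (x' + y') \<longrightarrow> x' = x \<and> y' = y)"

definition fundamental :: "zdelta \<Rightarrow> zdelta \<Rightarrow> zdelta \<Rightarrow> bool" where
  "fundamental x y z \<longleftrightarrow> x \<in> Delta \<and> y \<in> Delta"

end

theory Submission
  imports Defs
begin

lemma all_delta: "(\<forall>x. P x) \<longleftrightarrow> P d1 \<and> P d2 \<and> P d3 \<and> P d4 \<and> P d5 \<and> P d6"
  by (metis delta.exhaust)

lemma D_app[simp]:
  "D 1 x = (if x = d1 then 1 else 0)" "D (Suc 0) x = (if x = d1 then 1 else 0)" "D 2 x = (if x = d2 then 1 else 0)"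
  "D 3 x = (if x = d3 then 1 else 0)" "D 4 x = (if x = d4 then 1 else 0)"
  "D 5 x = (if x = d5 then 1 else 0)" "D 6 x = (if x = d6 then 1 else 0)"
  by (simp_all add: D_def)

lemma sc_iff: "sigma_coeffs a g \<longleftrightarrow>
   g d1 = int (a 1) - int (a 2) \<and>
   g d2 = int (a 1) + int (a 2) - int (a 3) \<and>
   g d3 = - int (a 1) + int (a 2) + int (a 3) - int (a 4) \<and>
   g d4 = - int (a 2) + int (a 3) + int (a 4) \<and>
   g d5 = - int (a 3) + int (a 4) - int (a 5) \<and>
   g d6 = - int (a 2) + int (a 5)"
proof -
  have s: "{1..5::nat} = {1,2,3,4,5}" by auto
  show ?thesis
    unfolding sigma_coeffs_def s fun_eq_iff all_delta
    by (simp add: sigma_def algebra_simps)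
qed

lemma wit:
  assumes "low_triple X Y Z" "sigma_coeffs a (X+Y-Z)" "x' \<in> NDelta" "y' \<in> NDelta"
    "sigma_coeffs bX (X - x')" "sigma_coeffs bY (Y - y')" "\<forall>n. bX n + bY n \<le> a n"
  shows "x' = X \<and> y' = Y"
proof -
  have l1: "le_Sigma x' X" using assms(5) by (auto simp: le_Sigma_def NSigma_def)
  have l2: "le_Sigma y' Y" using assms(6) by (auto simp: le_Sigma_def NSigma_def)
  have h: "\<forall>n. int (a n - (bX n + bY n)) = int (a n) - int (bX n) - int (bY n)"
    using assms(7) by (simp add: of_nat_diff)
  have "sigma_coeffs (\<lambda>n. a n - bX n - bY n) (x'+y'-Z)"
    using assms(2,5,6) unfolding sc_iff by (simp add: h)
  hence "le_Sigma Z (x'+y')" by (auto simp: le_Sigma_def NSigma_def)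
  thus ?thesis using assms(1,3,4) l1 l2 unfolding low_triple_def by blast
qed

theorem lemma2p8:
  fixes X Y Z :: zdelta
  assumes "low_triple X Y Z" and "fundamental X Y Z"
    and "sigma 5 \<in> supp_Sigma (X + Y - Z)"
  shows "let g = X + Y - Z;
             pair = (\<lambda>a b. (X = a \<and> Y = b) \<or> (X = b \<and> Y = a)) in
     (pair (D 2) (D 3) \<and> Z = D 1 + D 4 + D 5 \<and> g = sigma 2 + sigma 5)
   \<or> (pair (D 3) (D 3) \<and> Z = D 1 + 2 * D 5 \<and> g = sigma 2 + sigma 3 + sigma 5)
   \<or> (pair (D 2) (D 2) \<and> Z = D 4 + D 5 \<and> g = sigma 1 + sigma 2 + sigma 5)
   \<or> (pair (D 2) (D 3) \<and> Z = 2 * D 5 \<and> g = sigma 1 + sigma 2 + sigma 3 + sigma 5)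
   \<or> (pair (D 3) (D 4) \<and> Z = D 1 + D 5 \<and> g = sigma 2 + sigma 3 + sigma 4 + sigma 5)
   \<or> (pair (D 4) (D 4) \<and> Z = D 1 \<and> g = sigma 2 + sigma 3 + 2 * sigma 4 + sigma 5)"
proof -
  have low: "low_triple X Y Z" by fact
  have XN: "X \<in> NDelta" and YN: "Y \<in> NDelta" and ZN: "Z \<in> NDelta"
    using assms(1) unfolding low_triple_def by auto
  obtain i a where i: "sigma i = sigma 5" "i \<in> {1..5}" and a: "sigma_coeffs a (X+Y-Z)" and ai: "a i > 0"
    using assms(3) unfolding supp_Sigma_def by (smt (verit) mem_Collect_eq)
  have "i = 1 \<or> i = 2 \<or> i = 3 \<or> i = 4 \<or> i = 5" using i(2) by auto
  hence "i = 5" using fun_cong[OF i(1), of d6] by (auto simp: sigma_def)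
  with ai have a5: "a 5 > 0" by simp
  have N5: "D 5 \<in> NDelta" and N1: "D 1 \<in> NDelta" by (auto simp: NDelta_def)
  have c65: "sigma_coeffs (\<lambda>n. if n = 5 then 1 else 0) (D 6 - D 5)" by (simp add: sc_iff)
  have c21: "sigma_coeffs (\<lambda>n. if n = 2 \<or> n = 4 \<or> n = 5 then 1 else 0) (D 2 - D 1)" by (simp add: sc_iff)
  have c0: "sigma_coeffs (\<lambda>n. 0) (W - W)" for W by (simp add: sc_iff)
  have ne65: "D 5 \<noteq> D 6" and ne12: "D 1 \<noteq> D 2" by (auto simp: fun_eq_iff)
  have X6: "X \<noteq> D 6"
  proof
    assume X: "X = D 6"
    have "D 5 = X" using wit[OF low a N5 YN c65[folded X] c0] a5 by auto
    thus False using X ne65 by simp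
  qed
  have Y6: "Y \<noteq> D 6"
  proof
    assume Y: "Y = D 6"
    have "D 5 = Y" using wit[OF low a XN N5 c0 c65[folded Y]] a5 by auto
    thus False using Y ne65 by simp
  qed
  have X2: "\<not> (a 2 > 0 \<and> a 4 > 0 \<and> a 5 > 0)" if X: "X = D 2"
  proof
    assume h: "a 2 > 0 \<and> a 4 > 0 \<and> a 5 > 0"
    have "D 1 = X" using wit[OF low a N1 YN c21[folded X] c0] h by auto
    thus False using X ne12 by simp
  qed
  have Y2: "\<not> (a 2 > 0 \<and> a 4 > 0 \<and> a 5 > 0)" if Y: "Y = D 2"
  proof
    assume h: "a 2 > 0 \<and> a 4 > 0 \<and> a 5 > 0"
    have "D 1 = Y" using wit[OF low a XN N1 c0 c21[folded Y]] h by auto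
    thus False using Y ne12 by simp
  qed
  have co: "(X+Y-Z) d1 = int (a 1) - int (a 2)"
   "(X+Y-Z) d2 = int (a 1) + int (a 2) - int (a 3)"
   "(X+Y-Z) d3 = - int (a 1) + int (a 2) + int (a 3) - int (a 4)"
   "(X+Y-Z) d4 = - int (a 2) + int (a 3) + int (a 4)"
   "(X+Y-Z) d5 = - int (a 3) + int (a 4) - int (a 5)"
   "(X+Y-Z) d6 = - int (a 2) + int (a 5)" using a unfolding sc_iff by auto
  have zn: "Z d1 \<ge> 0" "Z d2 \<ge> 0" "Z d3 \<ge> 0" "Z d4 \<ge> 0" "Z d5 \<ge> 0" "Z d6 \<ge> 0"
    using ZN by (auto simp: NDelta_def)
  obtain p q where X: "X = D p" "p \<in> {1..6}" and Y: "Y = D q" "q \<in> {1..6}"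
    using assms(2) unfolding fundamental_def Delta_def by auto
  have pc: "p = 1 \<or> p = 2 \<or> p = 3 \<or> p = 4 \<or> p = 5"
  proof -
    have "p = 1 \<or> p = 2 \<or> p = 3 \<or> p = 4 \<or> p = 5 \<or> p = 6" using X(2) by auto
    thus ?thesis using X X6 by auto
  qed
  have qc: "q = 1 \<or> q = 2 \<or> q = 3 \<or> q = 4 \<or> q = 5"
  proof -
    have "q = 1 \<or> q = 2 \<or> q = 3 \<or> q = 4 \<or> q = 5 \<or> q = 6" using Y(2) by auto
    thus ?thesis using Y Y6 by auto
  qed
  have c11: ?thesis if P: "p = 1" "q = 1"
  proof -
    have vv: "False"
      using co zn  a5 unfolding X(1) Y(1) P by (simp; (intro conjI)?; linarith)
    thus ?thesis by simp
  qed
  have c12: ?thesis if P: "p = 1" "q = 2"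
  proof -
    have vv: "False"
      using co zn Y2 a5 unfolding X(1) Y(1) P by (simp; (intro conjI)?; linarith)
    thus ?thesis by simp
  qed
  have c13: ?thesis if P: "p = 1" "q = 3"
  proof -
    have vv: "False"
      using co zn  a5 unfolding X(1) Y(1) P by (simp; (intro conjI)?; linarith)
    thus ?thesis by simp
  qed
  have c14: ?thesis if P: "p = 1" "q = 4"
  proof -
    have vv: "False"
      using co zn  a5 unfolding X(1) Y(1) P by (simp; (intro conjI)?; linarith)
    thus ?thesis by simp
  qed
  have c15: ?thesis if P: "p = 1" "q = 5"
  proof -
    have vv: "False"
      using co zn  a5 unfolding X(1) Y(1) P by (simp; (intro conjI)?; linarith)
    thus ?thesis by simp
  qed
  have c21: ?thesis if P: "p = 2" "q = 1"
  proof -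
    have vv: "False"
      using co zn X2 a5 unfolding X(1) Y(1) P by (simp; (intro conjI)?; linarith)
    thus ?thesis by simp
  qed
  have c22: ?thesis if P: "p = 2" "q = 2"
  proof -
    have vv: "(a 1 = 1 \<and> a 2 = 1 \<and> a 3 = 0 \<and> a 4 = 0 \<and> a 5 = 1)"
      using co zn X2 Y2 a5 unfolding X(1) Y(1) P by (simp; (intro conjI)?; linarith)
    thus ?thesis
    proof (elim disjE conjE)
      assume v: "a 1 = 1" "a 2 = 1" "a 3 = 0" "a 4 = 0" "a 5 = 1"
      have g: "X + Y - Z = sigma 1 + sigma 2 + sigma 5" unfolding fun_eq_iff all_delta using co v by (simp add: sigma_def)
      have z: "Z = D 4 + D 5" unfolding fun_eq_iff all_delta using co v unfolding X(1) Y(1) P by simp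
      show ?thesis using g z unfolding X(1) Y(1) P by (simp add: Let_def)
    qed
  qed
  have c23: ?thesis if P: "p = 2" "q = 3"
  proof -
    have vv: "(a 1 = 0 \<and> a 2 = 1 \<and> a 3 = 0 \<and> a 4 = 0 \<and> a 5 = 1) \<or> (a 1 = 1 \<and> a 2 = 1 \<and> a 3 = 1 \<and> a 4 = 0 \<and> a 5 = 1)"
      using co zn X2 a5 unfolding X(1) Y(1) P by (cases "a 1 = 0"; simp; (intro conjI)?; linarith)
    thus ?thesis
    proof (elim disjE conjE)
      assume v: "a 1 = 0" "a 2 = 1" "a 3 = 0" "a 4 = 0" "a 5 = 1"
      have g: "X + Y - Z = sigma 2 + sigma 5" unfolding fun_eq_iff all_delta using co v by (simp add: sigma_def)
      have z: "Z = D 1 + D 4 + D 5" unfolding fun_eq_iff all_delta using co v unfolding X(1) Y(1) P by simp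
      show ?thesis using g z unfolding X(1) Y(1) P by (simp add: Let_def)
    next
      assume v: "a 1 = 1" "a 2 = 1" "a 3 = 1" "a 4 = 0" "a 5 = 1"
      have g: "X + Y - Z = sigma 1 + sigma 2 + sigma 3 + sigma 5" unfolding fun_eq_iff all_delta using co v by (simp add: sigma_def)
      have z: "Z = 2 * D 5" unfolding fun_eq_iff all_delta using co v unfolding X(1) Y(1) P by simp
      show ?thesis using g z unfolding X(1) Y(1) P by (simp add: Let_def)
    qed
  qed
  have c24: ?thesis if P: "p = 2" "q = 4"
  proof -
    have vv: "False"
      using co zn X2 a5 unfolding X(1) Y(1) P by (simp; (intro conjI)?; linarith)
    thus ?thesis by simp
  qed
  have c25: ?thesis if P: "p = 2" "q = 5"
  proof -
    have vv: "False"
      using co zn X2 a5 unfolding X(1) Y(1) P by (simp; (intro conjI)?; linarith)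
    thus ?thesis by simp
  qed
  have c31: ?thesis if P: "p = 3" "q = 1"
  proof -
    have vv: "False"
      using co zn  a5 unfolding X(1) Y(1) P by (simp; (intro conjI)?; linarith)
    thus ?thesis by simp
  qed
  have c32: ?thesis if P: "p = 3" "q = 2"
  proof -
    have vv: "(a 1 = 0 \<and> a 2 = 1 \<and> a 3 = 0 \<and> a 4 = 0 \<and> a 5 = 1) \<or> (a 1 = 1 \<and> a 2 = 1 \<and> a 3 = 1 \<and> a 4 = 0 \<and> a 5 = 1)"
      using co zn Y2 a5 unfolding X(1) Y(1) P by (cases "a 1 = 0"; simp; (intro conjI)?; linarith)
    thus ?thesis
    proof (elim disjE conjE)
      assume v: "a 1 = 0" "a 2 = 1" "a 3 = 0" "a 4 = 0" "a 5 = 1"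
      have g: "X + Y - Z = sigma 2 + sigma 5" unfolding fun_eq_iff all_delta using co v by (simp add: sigma_def)
      have z: "Z = D 1 + D 4 + D 5" unfolding fun_eq_iff all_delta using co v unfolding X(1) Y(1) P by simp
      show ?thesis using g z unfolding X(1) Y(1) P by (simp add: Let_def)
    next
      assume v: "a 1 = 1" "a 2 = 1" "a 3 = 1" "a 4 = 0" "a 5 = 1"
      have g: "X + Y - Z = sigma 1 + sigma 2 + sigma 3 + sigma 5" unfolding fun_eq_iff all_delta using co v by (simp add: sigma_def)
      have z: "Z = 2 * D 5" unfolding fun_eq_iff all_delta using co v unfolding X(1) Y(1) P by simp
      show ?thesis using g z unfolding X(1) Y(1) P by (simp add: Let_def)
    qed
  qed
  have c33: ?thesis if P: "p = 3" "q = 3"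
  proof -
    have vv: "(a 1 = 0 \<and> a 2 = 1 \<and> a 3 = 1 \<and> a 4 = 0 \<and> a 5 = 1)"
      using co zn  a5 unfolding X(1) Y(1) P by (simp; (intro conjI)?; linarith)
    thus ?thesis
    proof (elim disjE conjE)
      assume v: "a 1 = 0" "a 2 = 1" "a 3 = 1" "a 4 = 0" "a 5 = 1"
      have g: "X + Y - Z = sigma 2 + sigma 3 + sigma 5" unfolding fun_eq_iff all_delta using co v by (simp add: sigma_def)
      have z: "Z = D 1 + 2 * D 5" unfolding fun_eq_iff all_delta using co v unfolding X(1) Y(1) P by simp
      show ?thesis using g z unfolding X(1) Y(1) P by (simp add: Let_def)
    qed
  qed
  have c34: ?thesis if P: "p = 3" "q = 4"
  proof -
    have vv: "(a 1 = 0 \<and> a 2 = 1 \<and> a 3 = 1 \<and> a 4 = 1 \<and> a 5 = 1)"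
      using co zn  a5 unfolding X(1) Y(1) P by (simp; (intro conjI)?; linarith)
    thus ?thesis
    proof (elim disjE conjE)
      assume v: "a 1 = 0" "a 2 = 1" "a 3 = 1" "a 4 = 1" "a 5 = 1"
      have g: "X + Y - Z = sigma 2 + sigma 3 + sigma 4 + sigma 5" unfolding fun_eq_iff all_delta using co v by (simp add: sigma_def)
      have z: "Z = D 1 + D 5" unfolding fun_eq_iff all_delta using co v unfolding X(1) Y(1) P by simp
      show ?thesis using g z unfolding X(1) Y(1) P by (simp add: Let_def)
    qed
  qed
  have c35: ?thesis if P: "p = 3" "q = 5"
  proof -
    have vv: "False"
      using co zn  a5 unfolding X(1) Y(1) P by (simp; (intro conjI)?; linarith)
    thus ?thesis by simp
  qed
  have c41: ?thesis if P: "p = 4" "q = 1"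
  proof -
    have vv: "False"
      using co zn  a5 unfolding X(1) Y(1) P by (simp; (intro conjI)?; linarith)
    thus ?thesis by simp
  qed
  have c42: ?thesis if P: "p = 4" "q = 2"
  proof -
    have vv: "False"
      using co zn Y2 a5 unfolding X(1) Y(1) P by (simp; (intro conjI)?; linarith)
    thus ?thesis by simp
  qed
  have c43: ?thesis if P: "p = 4" "q = 3"
  proof -
    have vv: "(a 1 = 0 \<and> a 2 = 1 \<and> a 3 = 1 \<and> a 4 = 1 \<and> a 5 = 1)"
      using co zn  a5 unfolding X(1) Y(1) P by (simp; (intro conjI)?; linarith)
    thus ?thesis
    proof (elim disjE conjE)
      assume v: "a 1 = 0" "a 2 = 1" "a 3 = 1" "a 4 = 1" "a 5 = 1"
      have g: "X + Y - Z = sigma 2 + sigma 3 + sigma 4 + sigma 5" unfolding fun_eq_iff all_delta using co v by (simp add: sigma_def)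
      have z: "Z = D 1 + D 5" unfolding fun_eq_iff all_delta using co v unfolding X(1) Y(1) P by simp
      show ?thesis using g z unfolding X(1) Y(1) P by (simp add: Let_def)
    qed
  qed
  have c44: ?thesis if P: "p = 4" "q = 4"
  proof -
    have vv: "(a 1 = 0 \<and> a 2 = 1 \<and> a 3 = 1 \<and> a 4 = 2 \<and> a 5 = 1)"
      using co zn  a5 unfolding X(1) Y(1) P by (simp; (intro conjI)?; linarith)
    thus ?thesis
    proof (elim disjE conjE)
      assume v: "a 1 = 0" "a 2 = 1" "a 3 = 1" "a 4 = 2" "a 5 = 1"
      have g: "X + Y - Z = sigma 2 + sigma 3 + 2 * sigma 4 + sigma 5" unfolding fun_eq_iff all_delta using co v by (simp add: sigma_def)
      have z: "Z = D 1" unfolding fun_eq_iff all_delta using co v unfolding X(1) Y(1) P by simp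
      show ?thesis using g z unfolding X(1) Y(1) P by (simp add: Let_def)
    qed
  qed
  have c45: ?thesis if P: "p = 4" "q = 5"
  proof -
    have vv: "False"
      using co zn  a5 unfolding X(1) Y(1) P by (simp; (intro conjI)?; linarith)
    thus ?thesis by simp
  qed
  have c51: ?thesis if P: "p = 5" "q = 1"
  proof -
    have vv: "False"
      using co zn  a5 unfolding X(1) Y(1) P by (simp; (intro conjI)?; linarith)
    thus ?thesis by simp
  qed
  have c52: ?thesis if P: "p = 5" "q = 2"
  proof -
    have vv: "False"
      using co zn Y2 a5 unfolding X(1) Y(1) P by (simp; (intro conjI)?; linarith)
    thus ?thesis by simp
  qed
  have c53: ?thesis if P: "p = 5" "q = 3"
  proof -
    have vv: "False"
      using co zn  a5 unfolding X(1) Y(1) P by (simp; (intro conjI)?; linarith)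
    thus ?thesis by simp
  qed
  have c54: ?thesis if P: "p = 5" "q = 4"
  proof -
    have vv: "False"
      using co zn  a5 unfolding X(1) Y(1) P by (simp; (intro conjI)?; linarith)
    thus ?thesis by simp
  qed
  have c55: ?thesis if P: "p = 5" "q = 5"
  proof -
    have vv: "False"
      using co zn  a5 unfolding X(1) Y(1) P by (simp; (intro conjI)?; linarith)
    thus ?thesis by simp
  qed
  have cp1: ?thesis if "p = 1"
    by (insert qc, (elim disjE; (erule c11[OF that] | erule c12[OF that] | erule c13[OF that] | erule c14[OF that] | erule c15[OF that])))
  have cp2: ?thesis if "p = 2"
    by (insert qc, (elim disjE; (erule c21[OF that] | erule c22[OF that] | erule c23[OF that] | erule c24[OF that] | erule c25[OF that])))
  have cp3: ?thesis if "p = 3"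
    by (insert qc, (elim disjE; (erule c31[OF that] | erule c32[OF that] | erule c33[OF that] | erule c34[OF that] | erule c35[OF that])))
  have cp4: ?thesis if "p = 4"
    by (insert qc, (elim disjE; (erule c41[OF that] | erule c42[OF that] | erule c43[OF that] | erule c44[OF that] | erule c45[OF that])))
  have cp5: ?thesis if "p = 5"
    by (insert qc, (elim disjE; (erule c51[OF that] | erule c52[OF that] | erule c53[OF that] | erule c54[OF that] | erule c55[OF that])))
  show ?thesis by (insert pc, (elim disjE; (erule cp1 | erule cp2 | erule cp3 | erule cp4 | erule cp5)))
qed

end
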